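(* Let $\mathcal{X}=\mathcal{X}_1\times\cdots\times\mathcal{X}_n$ and $\mathcal{Y}=\mathcal{Y}_1\times\cdots\times\mathcal{Y}_m$ be finite sets, and let $k\in\{1,\ldots,n\}$. Let $\mathcal{P}$ be the partition model on $\mathcal{X}$ whose blocks are the sets $\{x_1\}\times\cdots\times\{x_k\}\times\mathcal{X}_{k+1}\times\cdots\times\mathcal{X}_n$ for all $(x_1,\ldots,x_k)\in\mathcal{X}_1\times\cdots\times\mathcal{X}_k$. If $$1+\sum_{j\in[m]}(|\mathcal{Y}_j|-1)\;\geq\;\Big(\prod_{i\in[k]}|\mathcal{X}_i|\Big)\Big/\max_{j\in[k]}|\mathcal{X}_j|,$$ then every distribution contained in $\mathcal{P}$ can be approximated arbitrarily well by distributions from $\operatorname{RBM}_{\mathcal{X},\mathcal{Y}}$ (i.e., $\mathcal{P}$ is contained in the topological closure of $\operatorname{RBM}_{\mathcal{X},\mathcal{Y}}$).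
   Context: For a finite product set $\mathcal{Z}=\mathcal{Z}_1\times\cdots\times\mathcal{Z}_k$, fix in each $\mathcal{Z}_i$ a reference state $z_i^0$ and let $F^{\mathcal{Z}}(z)=\big(1,(\mathbb{1}[z_i=a])_{i\in[k],\,a\in\mathcal{Z}_i\setminus\{z_i^0\}}\big)^\top$ be the sufficient statistics of the independence model on $\mathcal{Z}$. The restricted Boltzmann machine model $\operatorname{RBM}_{\mathcal{X},\mathcal{Y}}$ with visible states $\mathcal{X}$ and hidden states $\mathcal{Y}$ is the set of probability distributions on $\mathcal{X}$ of the form $p(x)=\frac{1}{Z(\Theta)}\sum_{y\in\mathcal{Y}}\exp\big(F^{\mathcal{X}}(x)^\top\Theta F^{\mathcal{Y}}(y)\big)$, $x\in\mathcal{X}$, for all real matrices $\Theta$ of the appropriate size, where $Z(\Theta)$ is the normalizing constant (i.e., the visible marginals of the exponential family on $\mathcal{X}\times\mathcal{Y}$ with sufficient statistics $F^{\mathcal{X}}(x)\otimes F^{\mathcal{Y}}(y)$). Given disjoint nonempty sets $A_1,\ldots,A_K\subseteq\mathcal{X}$ covering $\mathcal{X}$, the partition model with these blocks is the set of all mixtures $\sum_{k}\lambda_k u_{A_k}$ with $\lambda_k\ge 0$, $\sum_k\lambda_k=1$, where $u_{A_k}$ is the uniform distribution on $A_k$. *)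

theory Defs
  imports Complex_Main "HOL-Library.FuncSet"
begin

text \<open>A finite product set Z_1 x ... x Z_r is represented as PiE {..<r} Z, i.e. states
  are functions z with z i \<in> Z i for i < r (and undefined elsewhere).
  z0 i is the reference state of Z i.\<close>

text \<open>Index set of the sufficient statistics F^Z: None is the constant entry 1,
  Some (i,a) the indicator of z_i = a, for i < r and a \<in> Z i - {z0 i}.\<close>
definition stat_index :: "(nat \<Rightarrow> 'a set) \<Rightarrow> (nat \<Rightarrow> 'a) \<Rightarrow> nat \<Rightarrow> (nat \<times> 'a) option set" where
  "stat_index Z z0 r = insert None (Some ` {(i, a). i < r \<and> a \<in> Z i \<and> a \<noteq> z0 i})"

definition suff_stat :: "(nat \<Rightarrow> 'a) \<Rightarrow> (nat \<times> 'a) option \<Rightarrow> real" where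
  "suff_stat z s = (case s of None \<Rightarrow> 1 | Some (i, a) \<Rightarrow> (if z i = a then 1 else 0))"

definition rbm_energy ::
  "(nat \<Rightarrow> 'a set) \<Rightarrow> (nat \<Rightarrow> 'a) \<Rightarrow> nat \<Rightarrow> (nat \<Rightarrow> 'b set) \<Rightarrow> (nat \<Rightarrow> 'b) \<Rightarrow> nat
   \<Rightarrow> ((nat \<times> 'a) option \<Rightarrow> (nat \<times> 'b) option \<Rightarrow> real) \<Rightarrow> (nat \<Rightarrow> 'a) \<Rightarrow> (nat \<Rightarrow> 'b) \<Rightarrow> real" where
  "rbm_energy X x0 n Y y0 m \<Theta> x y =
     (\<Sum>s\<in>stat_index X x0 n. \<Sum>t\<in>stat_index Y y0 m. suff_stat x s * \<Theta> s t * suff_stat y t)"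

definition rbm_dist ::
  "(nat \<Rightarrow> 'a set) \<Rightarrow> (nat \<Rightarrow> 'a) \<Rightarrow> nat \<Rightarrow> (nat \<Rightarrow> 'b set) \<Rightarrow> (nat \<Rightarrow> 'b) \<Rightarrow> nat
   \<Rightarrow> ((nat \<times> 'a) option \<Rightarrow> (nat \<times> 'b) option \<Rightarrow> real) \<Rightarrow> (nat \<Rightarrow> 'a) \<Rightarrow> real" where
  "rbm_dist X x0 n Y y0 m \<Theta> x =
     (\<Sum>y\<in>PiE {..<m} Y. exp (rbm_energy X x0 n Y y0 m \<Theta> x y)) /
     (\<Sum>x'\<in>PiE {..<n} X. \<Sum>y\<in>PiE {..<m} Y. exp (rbm_energy X x0 n Y y0 m \<Theta> x' y))"

text \<open>The RBM model, as a set of distributions (functions on states; only their values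
  on PiE {..<n} X matter).\<close>
definition RBM ::
  "(nat \<Rightarrow> 'a set) \<Rightarrow> (nat \<Rightarrow> 'a) \<Rightarrow> nat \<Rightarrow> (nat \<Rightarrow> 'b set) \<Rightarrow> (nat \<Rightarrow> 'b) \<Rightarrow> nat
   \<Rightarrow> ((nat \<Rightarrow> 'a) \<Rightarrow> real) set" where
  "RBM X x0 n Y y0 m = {p. \<exists>\<Theta>. p = rbm_dist X x0 n Y y0 m \<Theta>}"

definition partition_model :: "'x set set \<Rightarrow> ('x \<Rightarrow> real) set" where
  "partition_model Bs = {p. \<exists>w. (\<forall>A\<in>Bs. w A \<ge> 0) \<and> (\<Sum>A\<in>Bs. w A) = 1 \<and>
      p = (\<lambda>x. \<Sum>A\<in>Bs. w A * (if x \<in> A then 1 / real (card A) else 0))}"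

definition prefix_blocks :: "(nat \<Rightarrow> 'a set) \<Rightarrow> nat \<Rightarrow> nat \<Rightarrow> (nat \<Rightarrow> 'a) set set" where
  "prefix_blocks X n k = (\<lambda>u. {x \<in> PiE {..<n} X. \<forall>i<k. x i = u i}) ` PiE {..<k} X"

definition approx_by :: "'x set \<Rightarrow> ('x \<Rightarrow> real) set \<Rightarrow> ('x \<Rightarrow> real) \<Rightarrow> bool" where
  "approx_by S M p \<longleftrightarrow> (\<forall>\<epsilon>>0. \<exists>q\<in>M. \<forall>x\<in>S. \<bar>p x - q x\<bar> < \<epsilon>)"

end

theory Submission
  imports Defs
begin

lemma stat_sum:
  assumes fin: "\<And>i. i < r \<Longrightarrow> finite (Z i)" and z: "z \<in> PiE {..<r} Z"
  shows "(\<Sum>s\<in>stat_index Z z0 r. suff_stat z s * col s)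
         = col None + (\<Sum>i<r. if z i \<noteq> z0 i then col (Some (i, z i)) else 0)"
proof -
  define P where "P = {(i, a). i < r \<and> a \<in> Z i \<and> a \<noteq> z0 i}"
  have P: "P = Sigma {..<r} (\<lambda>i. Z i - {z0 i})" unfolding P_def by auto
  have finP: "finite P" unfolding P using fin by auto
  have "(\<Sum>s\<in>stat_index Z z0 r. suff_stat z s * col s)
        = col None + (\<Sum>s\<in>Some ` P. suff_stat z s * col s)"
    unfolding stat_index_def P_def[symmetric] using finP
    by (subst sum.insert) (auto simp: suff_stat_def)
  also have "(\<Sum>s\<in>Some ` P. suff_stat z s * col s) = (\<Sum>q\<in>P. suff_stat z (Some q) * col (Some q))"
    by (subst sum.reindex) auto
  also have "\<dots> = (\<Sum>i<r. \<Sum>a\<in>Z i - {z0 i}. suff_stat z (Some (i, a)) * col (Some (i, a)))"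
    unfolding P by (subst sum.Sigma) (use fin in auto)
  also have "\<dots> = (\<Sum>i<r. if z i \<noteq> z0 i then col (Some (i, z i)) else 0)"
  proof (rule sum.cong[OF refl])
    fix i assume i: "i \<in> {..<r}"
    have zi: "z i \<in> Z i" using z i by auto
    have "(\<Sum>a\<in>Z i - {z0 i}. suff_stat z (Some (i, a)) * col (Some (i, a)))
        = (\<Sum>a\<in>Z i - {z0 i}. if z i = a then col (Some (i, a)) else 0)"
      by (rule sum.cong) (auto simp: suff_stat_def)
    also have "\<dots> = (if z i \<in> Z i - {z0 i} then col (Some (i, z i)) else 0)"
      using fin i by simp
    finally show "(\<Sum>a\<in>Z i - {z0 i}. suff_stat z (Some (i, a)) * col (Some (i, a)))
        = (if z i \<noteq> z0 i then col (Some (i, z i)) else 0)" using zi by auto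
  qed
  finally show ?thesis .
qed

definition loglin :: "nat \<Rightarrow> (nat \<Rightarrow> 'a set) \<Rightarrow> ((nat \<Rightarrow> 'a) \<Rightarrow> real) \<Rightarrow> bool" where
  "loglin n X \<phi> \<longleftrightarrow> (\<exists>c h. \<forall>x\<in>PiE {..<n} X. \<phi> x = c + (\<Sum>i<n. h i (x i)))"

lemma loglin_const: "loglin n X (\<lambda>x. c)"
  unfolding loglin_def by (rule exI[of _ c], rule exI[of _ "\<lambda>i a. 0"]) simp

lemma loglin_add:
  assumes "loglin n X f" "loglin n X g" shows "loglin n X (\<lambda>x. f x + g x)"
proof -
  obtain c h where 1: "\<forall>x\<in>PiE {..<n} X. f x = c + (\<Sum>i<n. h i (x i))" using assms(1) loglin_def by blast
  obtain d q where 2: "\<forall>x\<in>PiE {..<n} X. g x = d + (\<Sum>i<n. q i (x i))" using assms(2) loglin_def by blast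
  show ?thesis unfolding loglin_def
    by (rule exI[of _ "c + d"], rule exI[of _ "\<lambda>i a. h i a + q i a"]) (simp add: 1 2 sum.distrib)
qed

lemma loglin_scale:
  assumes "loglin n X f" shows "loglin n X (\<lambda>x. r * f x)"
proof -
  obtain c h where 1: "\<forall>x\<in>PiE {..<n} X. f x = c + (\<Sum>i<n. h i (x i))" using assms(1) loglin_def by blast
  show ?thesis unfolding loglin_def
    by (rule exI[of _ "r * c"], rule exI[of _ "\<lambda>i a. r * h i a"]) (simp add: 1 sum_distrib_left algebra_simps)
qed

lemma loglin_diff:
  assumes "loglin n X f" "loglin n X g" shows "loglin n X (\<lambda>x. f x - g x)"
  using loglin_add[OF assms(1) loglin_scale[OF assms(2), of "-1"]] by simp

lemma loglin_coords:
  assumes "I \<subseteq> {..<n}" shows "loglin n X (\<lambda>x. \<Sum>i\<in>I. g i (x i))"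
proof -
  have "(\<Sum>i<n. (if i \<in> I then g i (x i) else 0)) = (\<Sum>i\<in>I. g i (x i))" for x
  proof -
    have "{..<n} \<inter> I = I" using assms by auto
    then show ?thesis using sum.inter_restrict[of "{..<n}" "\<lambda>i. g i (x i)" I] by simp
  qed
  then show ?thesis unfolding loglin_def
    by (intro exI[of _ 0] exI[of _ "\<lambda>i a. if i \<in> I then g i a else 0"]) simp
qed

lemma loglin_coord:
  assumes "l < n" shows "loglin n X (\<lambda>x. g (x l))"
  using loglin_coords[of "{l}" n X "\<lambda>i a. g a"] assms by simp

lemma loglin_col:
  assumes fin: "\<And>i. i < n \<Longrightarrow> finite (X i)" and ll: "loglin n X \<phi>"
  shows "\<exists>col. \<forall>x\<in>PiE {..<n} X. (\<Sum>s\<in>stat_index X x0 n. suff_stat x s * col s) = \<phi> x"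
proof -
  obtain c h where 1: "\<forall>x\<in>PiE {..<n} X. \<phi> x = c + (\<Sum>i<n. h i (x i))" using ll loglin_def by blast
  define col where "col = (\<lambda>s. case s of None \<Rightarrow> c + (\<Sum>i<n. h i (x0 i))
                     | Some (i, a) \<Rightarrow> h i a - h i (x0 i))"
  have "(\<Sum>s\<in>stat_index X x0 n. suff_stat x s * col s) = \<phi> x" if x: "x \<in> PiE {..<n} X" for x
  proof -
    have "(\<Sum>s\<in>stat_index X x0 n. suff_stat x s * col s)
       = col None + (\<Sum>i<n. if x i \<noteq> x0 i then col (Some (i, x i)) else 0)"
      by (rule stat_sum[OF fin x])
    also have "(\<Sum>i<n. if x i \<noteq> x0 i then col (Some (i, x i)) else 0) = (\<Sum>i<n. h i (x i) - h i (x0 i))"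
      by (rule sum.cong) (auto simp: col_def)
    finally show ?thesis using 1 x by (simp add: col_def sum_subtractf)
  qed
  then show ?thesis by blast
qed

lemma energy_form:
  assumes finX: "\<And>i. i < n \<Longrightarrow> finite (X i)" and finY: "\<And>j. j < m \<Longrightarrow> finite (Y j)"
    and col: "\<And>t x. x \<in> PiE {..<n} X \<Longrightarrow> (\<Sum>s\<in>stat_index X x0 n. suff_stat x s * \<Theta> s t) = \<theta> t x"
    and x: "x \<in> PiE {..<n} X" and y: "y \<in> PiE {..<m} Y"
  shows "rbm_energy X x0 n Y y0 m \<Theta> x y
     = \<theta> None x + (\<Sum>j<m. if y j \<noteq> y0 j then \<theta> (Some (j, y j)) x else 0)"
proof -
  have "rbm_energy X x0 n Y y0 m \<Theta> x y
      = (\<Sum>t\<in>stat_index Y y0 m. \<Sum>s\<in>stat_index X x0 n. suff_stat x s * \<Theta> s t * suff_stat y t)"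
    unfolding rbm_energy_def by (rule sum.swap)
  also have "\<dots> = (\<Sum>t\<in>stat_index Y y0 m. suff_stat y t * \<theta> t x)"
    by (rule sum.cong[OF refl]) (simp add: col[OF x, symmetric] sum_distrib_left sum_distrib_right mult.commute mult.left_commute)
  also have "\<dots> = \<theta> None x + (\<Sum>j<m. if y j \<noteq> y0 j then \<theta> (Some (j, y j)) x else 0)"
    by (rule stat_sum[OF finY y])
  finally show ?thesis .
qed


lemma partition_facts:
  fixes X :: "nat \<Rightarrow> 'a set"
  assumes finX: "\<And>i. i < n \<Longrightarrow> finite (X i)" and x0: "\<And>i. i < n \<Longrightarrow> x0 i \<in> X i"
    and kn: "k \<le> n"
    and p: "p \<in> partition_model (prefix_blocks X n k)"
  shows "\<And>x. 0 \<le> p x" "\<And>x. p x \<le> 1" "(\<Sum>x\<in>PiE {..<n} X. p x) = 1"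
    "\<And>x x'. x \<in> PiE {..<n} X \<Longrightarrow> x' \<in> PiE {..<n} X \<Longrightarrow> (\<forall>i<k. x i = x' i) \<Longrightarrow> p x = p x'"
proof -
  define Bs where "Bs = prefix_blocks X n k"
  obtain w where w0: "\<forall>A\<in>Bs. w A \<ge> 0" and w1: "(\<Sum>A\<in>Bs. w A) = 1"
    and pw: "p = (\<lambda>x. \<Sum>A\<in>Bs. w A * (if x \<in> A then 1 / real (card A) else 0))"
    using p unfolding partition_model_def Bs_def by blast
  have finPX: "finite (PiE {..<n} X)" using finX by (intro finite_PiE) auto
  have finBs: "finite Bs" unfolding Bs_def prefix_blocks_def using finX kn
    by (intro finite_imageI finite_PiE) auto
  have sub: "A \<subseteq> PiE {..<n} X" if "A \<in> Bs" for A using that unfolding Bs_def prefix_blocks_def by auto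
  have ne: "A \<noteq> {}" if AB: "A \<in> Bs" for A
  proof -
    obtain u where u: "u \<in> PiE {..<k} X" and A: "A = {x \<in> PiE {..<n} X. \<forall>i<k. x i = u i}"
      using AB unfolding Bs_def prefix_blocks_def by blast
    define z where "z = (\<lambda>i. if i < k then u i else if i < n then x0 i else undefined)"
    have "z \<in> A" unfolding A z_def using u x0 kn by (auto simp: PiE_def Pi_def extensional_def)
    then show ?thesis by auto
  qed
  show "0 \<le> p x" for x unfolding pw using w0 by (intro sum_nonneg) auto
  show "p x \<le> 1" for x
  proof -
    have "p x \<le> (\<Sum>A\<in>Bs. w A)" unfolding pw
    proof (rule sum_mono)
      fix A assume A: "A \<in> Bs"
      have "(if x \<in> A then 1 / real (card A) else 0) \<le> 1"
        by (cases "card A") auto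
      then show "w A * (if x \<in> A then 1 / real (card A) else 0) \<le> w A"
        using w0 A by (intro mult_left_le) auto
    qed
    then show ?thesis using w1 by simp
  qed
  show "(\<Sum>x\<in>PiE {..<n} X. p x) = 1"
  proof -
    have "(\<Sum>x\<in>PiE {..<n} X. p x) = (\<Sum>A\<in>Bs. w A * (\<Sum>x\<in>PiE {..<n} X. (if x \<in> A then 1 / real (card A) else 0)))"
      unfolding pw by (subst sum.swap) (simp add: sum_distrib_left)
    also have "\<dots> = (\<Sum>A\<in>Bs. w A)"
    proof (rule sum.cong[OF refl])
      fix A assume A: "A \<in> Bs"
      have finA: "finite A" using sub[OF A] finPX finite_subset by blast
      have "(\<Sum>x\<in>PiE {..<n} X. (if x \<in> A then 1 / real (card A) else 0)) = (\<Sum>x\<in>PiE {..<n} X \<inter> A. 1 / real (card A))"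
        using sum.inter_restrict[OF finPX, of "\<lambda>x. 1 / real (card A)" A] by simp
      also have "PiE {..<n} X \<inter> A = A" using sub[OF A] by auto
      also have "(\<Sum>x\<in>A. 1 / real (card A)) = 1" using finA ne[OF A] by simp
      finally show "w A * (\<Sum>x\<in>PiE {..<n} X. (if x \<in> A then 1 / real (card A) else 0)) = w A" by simp
    qed
    finally show ?thesis using w1 by simp
  qed
  show "p x = p x'" if x: "x \<in> PiE {..<n} X" and x': "x' \<in> PiE {..<n} X" and eq: "\<forall>i<k. x i = x' i" for x x'
  proof -
    have "x \<in> A \<longleftrightarrow> x' \<in> A" if "A \<in> Bs" for A
      using that x x' eq unfolding Bs_def prefix_blocks_def by auto
    then show ?thesis unfolding pw by (intro sum.cong) auto
  qed
qed


lemma approx_lemma: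
  fixes U :: "real \<Rightarrow> 'x \<Rightarrow> real"
  assumes finS: "finite S" and sum1: "(\<Sum>x\<in>S. p x) = 1"
    and bound: "\<And>T x. T \<ge> 0 \<Longrightarrow> x \<in> S \<Longrightarrow> \<bar>U T x - p x\<bar> \<le> C * exp (- T)"
    and eps: "\<epsilon> > 0"
  shows "\<exists>T\<ge>0. \<forall>x\<in>S. \<bar>p x - U T x / (\<Sum>x'\<in>S. U T x')\<bar> < \<epsilon>"
proof -
  have e0: "((\<lambda>T. exp (- T)) \<longlongrightarrow> (0::real)) at_top"
    by (intro filterlim_compose[OF exp_at_bot] filterlim_uminus_at_bot_at_top)
  have lim: "((\<lambda>T. U T x) \<longlongrightarrow> p x) at_top" if x: "x \<in> S" for x
  proof (rule tendsto_sandwich[of "\<lambda>T. p x - C * exp (- T)" _ _ "\<lambda>T. p x + C * exp (- T)"])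
    show "\<forall>\<^sub>F T in at_top. p x - C * exp (- T) \<le> U T x"
      using eventually_ge_at_top[of "0::real"] by eventually_elim (use bound[OF _ x] in force)
    show "\<forall>\<^sub>F T in at_top. U T x \<le> p x + C * exp (- T)"
      using eventually_ge_at_top[of "0::real"] by eventually_elim (use bound[OF _ x] in force)
    show "((\<lambda>T. p x - C * exp (- T)) \<longlongrightarrow> p x) at_top"
      using tendsto_diff[OF tendsto_const tendsto_mult[OF tendsto_const e0], of "p x" C] by simp
    show "((\<lambda>T. p x + C * exp (- T)) \<longlongrightarrow> p x) at_top"
      using tendsto_add[OF tendsto_const tendsto_mult[OF tendsto_const e0], of "p x" C] by simp
  qed
  have limZ: "((\<lambda>T. \<Sum>x'\<in>S. U T x') \<longlongrightarrow> 1) at_top"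
    using tendsto_sum[of S "\<lambda>x T. U T x" "\<lambda>x. p x" at_top] lim sum1 by simp
  have limq: "((\<lambda>T. U T x / (\<Sum>x'\<in>S. U T x')) \<longlongrightarrow> p x) at_top" if x: "x \<in> S" for x
    using tendsto_divide[OF lim[OF x] limZ] by simp
  have "\<forall>\<^sub>F T in at_top. \<forall>x\<in>S. \<bar>p x - U T x / (\<Sum>x'\<in>S. U T x')\<bar> < \<epsilon>"
  proof (rule eventually_ball_finite[OF finS], rule ballI)
    fix x assume x: "x \<in> S"
    have "\<forall>\<^sub>F T in at_top. dist (U T x / (\<Sum>x'\<in>S. U T x')) (p x) < \<epsilon>"
      using tendstoD[OF limq[OF x] eps] .
    then show "\<forall>\<^sub>F T in at_top. \<bar>p x - U T x / (\<Sum>x'\<in>S. U T x')\<bar> < \<epsilon>"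
      by eventually_elim (simp add: dist_real_def abs_minus_commute)
  qed
  then obtain N where N: "\<And>T. T \<ge> N \<Longrightarrow> \<forall>x\<in>S. \<bar>p x - U T x / (\<Sum>x'\<in>S. U T x')\<bar> < \<epsilon>"
    unfolding eventually_at_top_linorder by blast
  show ?thesis using N[of "max N 0"] by (intro exI[of _ "max N 0"]) auto
qed


lemma card_stat_index:
  assumes finY: "\<And>j. j < m \<Longrightarrow> finite (Y j)" and y0: "\<And>j. j < m \<Longrightarrow> y0 j \<in> Y j"
  shows "finite (stat_index Y y0 m)" "real (card (stat_index Y y0 m)) = 1 + (\<Sum>j<m. (real (card (Y j)) - 1))"
proof -
  define P where "P = {(i, a). i < m \<and> a \<in> Y i \<and> a \<noteq> y0 i}"
  have P: "P = Sigma {..<m} (\<lambda>i. Y i - {y0 i})" unfolding P_def by auto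
  have finP: "finite P" unfolding P using finY by auto
  show "finite (stat_index Y y0 m)" unfolding stat_index_def P_def[symmetric] using finP by simp
  have "card (stat_index Y y0 m) = Suc (card P)" unfolding stat_index_def P_def[symmetric]
    using finP by (simp add: card_image)
  moreover have "card P = (\<Sum>j<m. card (Y j - {y0 j}))" unfolding P using finY
    by (subst card_SigmaI) auto
  moreover have "real (card (Y j - {y0 j})) = real (card (Y j)) - 1" if "j < m" for j
  proof -
    have "card (Y j) \<ge> 1" using finY[OF that] y0[OF that] by (metis One_nat_def Suc_leI card_gt_0_iff empty_iff)
    then show ?thesis using finY[OF that] y0[OF that] by (simp add: of_nat_diff)
  qed
  ultimately show "real (card (stat_index Y y0 m)) = 1 + (\<Sum>j<m. (real (card (Y j)) - 1))"
    by simp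
qed

lemma comb_lemma:
  fixes X :: "nat \<Rightarrow> 'a set" and Y :: "nat \<Rightarrow> 'b set"
  assumes finX: "\<And>i. i < n \<Longrightarrow> finite (X i)" and x0: "\<And>i. i < n \<Longrightarrow> x0 i \<in> X i"
    and finY: "\<And>j. j < m \<Longrightarrow> finite (Y j)" and y0: "\<And>j. j < m \<Longrightarrow> y0 j \<in> Y j"
    and k1: "1 \<le> k" and kn: "k \<le> n"
    and ineq: "1 + (\<Sum>j<m. (real (card (Y j)) - 1))
           \<ge> (\<Prod>i<k. real (card (X i))) / real (Max ((\<lambda>j. card (X j)) ` {..<k}))"
  shows "\<exists>l<k. \<exists>\<sigma>. \<sigma> ` PiE ({..<k} - {l}) X \<subseteq> stat_index Y y0 m \<and> inj_on \<sigma> (PiE ({..<k} - {l}) X)"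
proof -
  have "Max ((\<lambda>j. card (X j)) ` {..<k}) \<in> (\<lambda>j. card (X j)) ` {..<k}"
    using k1 by (intro Max_in) (auto simp: lessThan_empty_iff)
  then obtain l where l: "l < k" and M: "Max ((\<lambda>j. card (X j)) ` {..<k}) = card (X l)" by auto
  have cl: "card (X l) \<ge> 1" using finX[of l] x0[of l] l kn
    by (metis One_nat_def Suc_leI card_gt_0_iff empty_iff less_le_trans)
  define idx where "idx = {..<k} - {l}"
  have "(\<Prod>i<k. real (card (X i))) = real (card (X l)) * (\<Prod>i\<in>idx. real (card (X i)))"
    unfolding idx_def using l by (subst prod.remove[of _ l]) auto
  then have "(\<Prod>i<k. real (card (X i))) / real (Max ((\<lambda>j. card (X j)) ` {..<k})) = (\<Prod>i\<in>idx. real (card (X i)))"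
    using cl M by simp
  moreover have "card (PiE idx X) = (\<Prod>i\<in>idx. card (X i))" unfolding idx_def
    by (rule card_PiE) auto
  ultimately have "real (card (PiE idx X)) \<le> real (card (stat_index Y y0 m))"
    using ineq card_stat_index(2)[OF finY y0] by simp
  then have le: "card (PiE idx X) \<le> card (stat_index Y y0 m)" by linarith
  have finV: "finite (PiE idx X)" unfolding idx_def using finX kn by (intro finite_PiE) auto
  obtain \<sigma> where "\<sigma> ` PiE idx X \<subseteq> stat_index Y y0 m \<and> inj_on \<sigma> (PiE idx X)"
    using card_le_inj[OF finV card_stat_index(1)[OF finY y0] le] by blast
  then show ?thesis using l unfolding idx_def by blast
qed


lemma construction:
  fixes X :: "nat \<Rightarrow> 'a set" and Y :: "nat \<Rightarrow> 'b set" and p :: "(nat \<Rightarrow> 'a) \<Rightarrow> real"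
    and \<sigma> :: "(nat \<Rightarrow> 'a) \<Rightarrow> (nat \<times> 'b) option"
  assumes finX: "\<And>i. i < n \<Longrightarrow> finite (X i)" and x0: "\<And>i. i < n \<Longrightarrow> x0 i \<in> X i"
    and finY: "\<And>j. j < m \<Longrightarrow> finite (Y j)" and y0: "\<And>j. j < m \<Longrightarrow> y0 j \<in> Y j"
    and kn: "k \<le> n" and l: "l < k"
    and \<sigma>C: "\<sigma> ` PiE ({..<k} - {l}) X \<subseteq> stat_index Y y0 m"
    and \<sigma>inj: "inj_on \<sigma> (PiE ({..<k} - {l}) X)"
    and p0: "\<And>x. 0 \<le> p x" and p1: "\<And>x. p x \<le> 1"
    and ppre: "\<And>x x'. x \<in> PiE {..<n} X \<Longrightarrow> x' \<in> PiE {..<n} X \<Longrightarrow> (\<forall>i<k. x i = x' i) \<Longrightarrow> p x = p x'"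
    and T: "T \<ge> 0"
  shows "\<exists>\<Theta>. \<forall>x\<in>PiE {..<n} X.
     \<bar>(\<Sum>y\<in>PiE {..<m} Y. exp (rbm_energy X x0 n Y y0 m \<Theta> x y)) - p x\<bar>
       \<le> (1 + real (card (PiE {..<m} Y))) * exp (- T)"
proof -
  define idx where "idx = {..<k} - {l}"
  define V where "V = PiE idx X"
  define PX where "PX = PiE {..<n} X"
  define PY where "PY = PiE {..<m} Y"
  define vc where "vc = (\<lambda>c. the_inv_into V \<sigma> c)"
  define ext where "ext = (\<lambda>(v::nat \<Rightarrow> 'a) a i. if i \<in> idx then v i else if i = l then a else if i < n then x0 i else undefined)"
  define G where "G = (\<lambda>z. ln (max (p z) (exp (- T))))"
  define Hm where "Hm = (\<lambda>(v::nat \<Rightarrow> 'a) (x::nat \<Rightarrow> 'a). \<Sum>i\<in>idx. (if x i \<noteq> v i then 1 else 0::real))"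
  define a where "a = (\<lambda>c::(nat \<times> 'b) option. if c = None then 1 else real k + 2)"
  define f where "f = (\<lambda>c x. if c \<in> \<sigma> ` V then - (T * a c * Hm (vc c) x) + G (ext (vc c) (x l)) else - (T * a c))"
  define \<theta> where "\<theta> = (\<lambda>t x. if t = None then f None x else f t x - f None x)"
  have idx_sub: "idx \<subseteq> {..<n}" unfolding idx_def using kn by auto
  have ln: "l < n" using l kn by simp
  have ll_f: "loglin n X (f c)" for c
  proof (cases "c \<in> \<sigma> ` V")
    case True
    have "f c = (\<lambda>x. (- (T * a c)) * (\<Sum>i\<in>idx. (\<lambda>i b. if b \<noteq> vc c i then 1 else 0::real) i (x i)) + G (ext (vc c) (x l)))"
      using True by (simp add: f_def Hm_def fun_eq_iff)
    then show ?thesis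
      using loglin_add[OF loglin_scale[OF loglin_coords[OF idx_sub, of X "\<lambda>i b. if b \<noteq> vc c i then 1 else 0"], of "- (T * a c)"]
          loglin_coord[OF ln, of X "\<lambda>b. G (ext (vc c) b)"]] by simp
  next
    case False
    then have "f c = (\<lambda>x. - (T * a c))" by (simp add: f_def fun_eq_iff)
    then show ?thesis using loglin_const by simp
  qed
  have ll_\<theta>: "loglin n X (\<theta> t)" for t
    using ll_f loglin_diff[OF ll_f ll_f] unfolding \<theta>_def by (cases "t = None") auto
  have "\<forall>t. \<exists>col. \<forall>x\<in>PX. (\<Sum>s\<in>stat_index X x0 n. suff_stat x s * col s) = \<theta> t x"
    unfolding PX_def using loglin_col[OF finX ll_\<theta>] by blast
  then obtain \<Theta>' where \<Theta>': "\<And>t x. x \<in> PX \<Longrightarrow> (\<Sum>s\<in>stat_index X x0 n. suff_stat x s * \<Theta>' t s) = \<theta> t x"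
    by metis
  define \<Theta> where "\<Theta> = (\<lambda>s t. \<Theta>' t s)"
  have energy: "rbm_energy X x0 n Y y0 m \<Theta> x y
     = f None x + (\<Sum>j<m. if y j \<noteq> y0 j then f (Some (j, y j)) x - f None x else 0)"
    if x: "x \<in> PX" and y: "y \<in> PY" for x y
  proof -
    have "rbm_energy X x0 n Y y0 m \<Theta> x y = \<theta> None x + (\<Sum>j<m. if y j \<noteq> y0 j then \<theta> (Some (j, y j)) x else 0)"
      by (rule energy_form[OF finX finY _ x[unfolded PX_def] y[unfolded PY_def]]) (use \<Theta>' in \<open>auto simp: \<Theta>_def PX_def\<close>)
    moreover have "(\<Sum>j<m. if y j \<noteq> y0 j then \<theta> (Some (j, y j)) x else 0)
       = (\<Sum>j<m. if y j \<noteq> y0 j then f (Some (j, y j)) x - f None x else 0)"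
      by (rule sum.cong) (auto simp: \<theta>_def)
    ultimately show ?thesis by (simp add: \<theta>_def)
  qed
  have Gb: "- T \<le> G z \<and> G z \<le> 0" for z
  proof -
    have "exp (- T) \<le> max (p z) (exp (- T))" by simp
    moreover have "0 < max (p z) (exp (- T))" by (simp add: less_max_iff_disj)
    ultimately have "ln (exp (- T)) \<le> ln (max (p z) (exp (- T)))" by (subst ln_le_cancel_iff) auto
    moreover have "max (p z) (exp (- T)) \<le> 1" using p1[of z] T by simp
    then have "ln (max (p z) (exp (- T))) \<le> 0" using \<open>0 < max (p z) (exp (- T))\<close> by (subst ln_le_zero_iff) auto
    ultimately show ?thesis unfolding G_def by simp
  qed
  have Hb: "0 \<le> Hm v x \<and> Hm v x \<le> real k" for v x
  proof -
    have "Hm v x \<le> (\<Sum>i\<in>idx. 1)" unfolding Hm_def by (rule sum_mono) auto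
    also have "\<dots> = real (card idx)" by simp
    also have "card idx \<le> k" unfolding idx_def by (metis card_Diff1_le card_lessThan finite_lessThan)
    finally show ?thesis unfolding Hm_def by (auto intro: sum_nonneg)
  qed
  have a1: "a c \<ge> 1" for c unfolding a_def by auto
  have B1: "f c x \<le> 0" for c x
  proof -
    have "0 \<le> T * a c * Hm (vc c) x" using T a1[of c] Hb[of "vc c" x] by simp
    moreover have "0 \<le> T * a c" using T a1[of c] by simp
    moreover have "G (ext (vc c) (x l)) \<le> 0" using Gb by simp
    ultimately show ?thesis unfolding f_def by (cases "c \<in> \<sigma> ` V") (simp_all only: if_True if_False; linarith)+
  qed
  have B3: "f None x \<ge> - (T * (real k + 1))" for x
  proof (cases "None \<in> \<sigma> ` V")
    case True
    have "T * Hm (vc None) x \<le> T * real k" using Hb T by (simp add: mult_left_mono)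
    moreover have "- T \<le> G (ext (vc None) (x l))" using Gb by simp
    moreover have "f None x = - (T * Hm (vc None) x) + G (ext (vc None) (x l))"
      using True by (simp add: f_def a_def)
    ultimately show ?thesis by (simp add: algebra_simps)
  next
    case False
    then show ?thesis using T unfolding f_def a_def by (auto simp: algebra_simps)
  qed
  have main: "\<bar>(\<Sum>y\<in>PY. exp (rbm_energy X x0 n Y y0 m \<Theta> x y)) - p x\<bar> \<le> (1 + real (card PY)) * exp (- T)"
    if x: "x \<in> PX" for x
  proof -
    define v where "v = restrict x idx"
    define cs where "cs = \<sigma> v"
    have vV: "v \<in> V" unfolding v_def V_def using x idx_sub unfolding PX_def by auto
    have csV: "cs \<in> \<sigma> ` V" unfolding cs_def using vV by simp
    have vc_cs: "vc cs = v" unfolding vc_def cs_def V_def using the_inv_into_f_f[OF \<sigma>inj] vV unfolding V_def idx_def by simp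
    have H0: "Hm v x = 0" unfolding Hm_def v_def by simp
    have ext_in: "ext v (x l) \<in> PX" using x vV ln x0 idx_sub unfolding PX_def V_def ext_def
      by (auto simp: PiE_def Pi_def extensional_def)
    have "p (ext v (x l)) = p x"
      by (rule ppre[OF ext_in[unfolded PX_def] x[unfolded PX_def]]) (auto simp: ext_def v_def idx_def)
    then have fcs: "f cs x = ln (max (p x) (exp (- T)))" using csV vc_cs H0 unfolding f_def G_def by simp
    have B2: "f c x \<le> - (T * a c)" if "c \<noteq> cs" for c
    proof (cases "c \<in> \<sigma> ` V")
      case True
      have vcV: "vc c \<in> V" unfolding vc_def using the_inv_into_into[OF \<sigma>inj] True unfolding V_def idx_def by blast
      have "vc c \<noteq> v"
      proof
        assume "vc c = v"
        then have "\<sigma> (vc c) = cs" unfolding cs_def by simp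
        moreover have "\<sigma> (vc c) = c" unfolding vc_def using f_the_inv_into_f[OF \<sigma>inj] True unfolding V_def idx_def by blast
        ultimately show False using that by simp
      qed
      then obtain i where i: "i \<in> idx" "vc c i \<noteq> v i"
        using vcV vV unfolding V_def by (metis PiE_ext)
      have "1 \<le> Hm (vc c) x"
      proof -
        have "(if x i \<noteq> vc c i then 1 else 0::real) \<le> Hm (vc c) x" unfolding Hm_def
          by (rule member_le_sum) (use i idx_def in auto)
        then show ?thesis using i unfolding v_def by simp
      qed
      then have "T * a c * 1 \<le> T * a c * Hm (vc c) x" using T a1[of c] by (intro mult_left_mono) auto
      moreover have "G (ext (vc c) (x l)) \<le> 0" using Gb by simp
      moreover have "f c x = - (T * a c * Hm (vc c) x) + G (ext (vc c) (x l))"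
        using True by (simp add: f_def)
      ultimately show ?thesis by simp
    next
      case False
      then show ?thesis unfolding f_def by simp
    qed
    have aS: "a (Some q) = real k + 2" for q unfolding a_def by simp
    have aN: "a None = 1" unfolding a_def by simp
    define r0 where "r0 = restrict y0 {..<m}"
    define ys where "ys = (case cs of None \<Rightarrow> r0 | Some (j, b) \<Rightarrow> r0(j := b))"
    have csC: "cs \<in> stat_index Y y0 m" using csV \<sigma>C unfolding V_def idx_def by blast
    have r0PY: "r0 \<in> PY" unfolding r0_def PY_def using y0 by auto
    have ys: "ys \<in> PY \<and> rbm_energy X x0 n Y y0 m \<Theta> x ys = f cs x"
    proof (cases cs)
      case None
      then have "ys = r0" unfolding ys_def by simp
      then show ?thesis using energy[OF x r0PY] r0PY None unfolding r0_def by simp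
    next
      case (Some q)
      then obtain j b where q: "cs = Some (j, b)" by (cases q) auto
      then have jb: "j < m" "b \<in> Y j" "b \<noteq> y0 j" using csC unfolding stat_index_def by auto
      have ysd: "ys = r0(j := b)" unfolding ys_def q by simp
      have ysPY: "ys \<in> PY" unfolding ysd using r0PY jb unfolding PY_def r0_def
        by (auto simp: PiE_def Pi_def extensional_def)
      have "(\<Sum>i<m. if ys i \<noteq> y0 i then f (Some (i, ys i)) x - f None x else 0)
          = (\<Sum>i<m. if i = j then f cs x - f None x else 0)"
        by (rule sum.cong) (auto simp: ysd r0_def q jb)
      also have "\<dots> = f cs x - f None x" using jb by simp
      finally show ?thesis using energy[OF x ysPY] ysPY by simp
    qed
    have other: "rbm_energy X x0 n Y y0 m \<Theta> x y \<le> - T" if y: "y \<in> PY" and yne: "y \<noteq> ys" for y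
    proof (cases "\<forall>j<m. y j = y0 j")
      case True
      then have "y = r0" using y unfolding r0_def PY_def by (auto simp: PiE_def extensional_def fun_eq_iff)
      then have "cs \<noteq> None" using yne unfolding ys_def by (cases cs) auto
      then have "f None x \<le> - T" using B2[of None] aN by auto
      then show ?thesis using energy[OF x y] True by simp
    next
      case False
      define D where "D = (\<lambda>j. if y j \<noteq> y0 j then f (Some (j, y j)) x - f None x else 0)"
      define j1 where "j1 = (if \<exists>j<m. y j \<noteq> y0 j \<and> Some (j, y j) = cs
                         then SOME j. j<m \<and> y j \<noteq> y0 j \<and> Some (j, y j) = cs
                         else SOME j. j<m \<and> y j \<noteq> y0 j)"
      have j1: "j1 < m \<and> y j1 \<noteq> y0 j1 \<and> (\<forall>j<m. j \<noteq> j1 \<longrightarrow> y j \<noteq> y0 j \<longrightarrow> Some (j, y j) \<noteq> cs)"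
      proof (cases "\<exists>j<m. y j \<noteq> y0 j \<and> Some (j, y j) = cs")
        case True
        then have "j1 < m \<and> y j1 \<noteq> y0 j1 \<and> Some (j1, y j1) = cs"
          using someI_ex[OF True] True unfolding j1_def by simp
        then show ?thesis by auto
      next
        case F2: False
        have ex: "\<exists>j. j < m \<and> y j \<noteq> y0 j" using False by auto
        have "j1 = (SOME j. j<m \<and> y j \<noteq> y0 j)" unfolding j1_def using F2 by (simp only: if_False)
        then have "j1 < m \<and> y j1 \<noteq> y0 j1" using someI_ex[OF ex] by simp
        then show ?thesis using F2 by auto
      qed
      have Drest: "D j \<le> 0 \<and> (y j \<noteq> y0 j \<longrightarrow> D j \<le> - T)" if "j < m" "j \<noteq> j1" for j
      proof (cases "y j \<noteq> y0 j")
        case True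
        then have "f (Some (j, y j)) x \<le> - (T * (real k + 2))" using B2 j1 that aS by metis
        then have "D j \<le> - T" using B3[of x] True unfolding D_def by (auto simp: algebra_simps)
        then show ?thesis using T True by auto
      next
        case False
        then show ?thesis unfolding D_def by simp
      qed
      have sumD: "(\<Sum>j<m. D j) = D j1 + (\<Sum>j\<in>{..<m} - {j1}. D j)"
        using j1 by (subst sum.remove[of _ j1]) auto
      have E: "rbm_energy X x0 n Y y0 m \<Theta> x y = f (Some (j1, y j1)) x + (\<Sum>j\<in>{..<m} - {j1}. D j)"
        using energy[OF x y] sumD j1 unfolding D_def[symmetric] by (simp add: D_def)
      show ?thesis
      proof (cases "\<exists>j2<m. j2 \<noteq> j1 \<and> y j2 \<noteq> y0 j2")
        case True
        then obtain j2 where j2: "j2 < m" "j2 \<noteq> j1" "y j2 \<noteq> y0 j2" by auto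
        have "(\<Sum>j\<in>{..<m} - {j1}. D j) = D j2 + (\<Sum>j\<in>{..<m} - {j1} - {j2}. D j)"
          using j2 by (subst sum.remove[of _ j2]) auto
        also have "(\<Sum>j\<in>{..<m} - {j1} - {j2}. D j) \<le> 0" using Drest by (intro sum_nonpos) auto
        finally have "(\<Sum>j\<in>{..<m} - {j1}. D j) \<le> - T" using Drest[of j2] j2 by linarith
        then show ?thesis using E B1[of "Some (j1, y j1)" x] by linarith
      next
        case F3: False
        have "(\<Sum>j\<in>{..<m} - {j1}. D j) = 0" using F3 unfolding D_def by (intro sum.neutral) auto
        have "y = r0(j1 := y j1)" using y F3 j1 unfolding r0_def PY_def
          by (auto simp: PiE_def extensional_def fun_eq_iff)
        then have "cs \<noteq> Some (j1, y j1)" using yne unfolding ys_def by auto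
        then have "f (Some (j1, y j1)) x \<le> - (T * (real k + 2))" using B2 aS by metis
        moreover have "- (T * (real k + 2)) \<le> - T"
        proof -
          have "0 \<le> T * real k" using T by simp
          moreover have "T * (real k + 2) = T * real k + 2 * T" by (simp add: algebra_simps)
          ultimately show ?thesis using T by linarith
        qed
        ultimately show ?thesis using E \<open>(\<Sum>j\<in>{..<m} - {j1}. D j) = 0\<close> by linarith
      qed
    qed
    have finPY: "finite PY" unfolding PY_def using finY by (intro finite_PiE) auto
    have ysPY: "ys \<in> PY" using ys by simp
    have split: "(\<Sum>y\<in>PY. exp (rbm_energy X x0 n Y y0 m \<Theta> x y))
       = exp (f cs x) + (\<Sum>y\<in>PY - {ys}. exp (rbm_energy X x0 n Y y0 m \<Theta> x y))"
      using ys finPY by (subst sum.remove[OF finPY ysPY]) auto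
    have "(\<Sum>y\<in>PY - {ys}. exp (rbm_energy X x0 n Y y0 m \<Theta> x y)) \<le> (\<Sum>y\<in>PY - {ys}. exp (- T))"
      using other by (intro sum_mono) auto
    also have "\<dots> = real (card (PY - {ys})) * exp (- T)" by simp
    also have "\<dots> \<le> real (card PY) * exp (- T)"
      using card_mono[OF finPY, of "PY - {ys}"] by (intro mult_right_mono) auto
    finally have rest: "(\<Sum>y\<in>PY - {ys}. exp (rbm_energy X x0 n Y y0 m \<Theta> x y)) \<le> real (card PY) * exp (- T)" .
    have rest0: "0 \<le> (\<Sum>y\<in>PY - {ys}. exp (rbm_energy X x0 n Y y0 m \<Theta> x y))" by (intro sum_nonneg) auto
    have "exp (f cs x) = max (p x) (exp (- T))" unfolding fcs by (subst exp_ln) (simp_all add: less_max_iff_disj)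
    then have e1: "\<bar>exp (f cs x) - p x\<bar> \<le> exp (- T)" using p0[of x] by (auto simp: max_def)
    show ?thesis unfolding split using e1 rest rest0 by (simp add: algebra_simps abs_le_iff)
  qed
  show ?thesis using main unfolding PX_def PY_def by blast
qed


theorem corollary1:
  fixes X :: "nat \<Rightarrow> 'a set" and x0 :: "nat \<Rightarrow> 'a" and n :: nat
    and Y :: "nat \<Rightarrow> 'b set" and y0 :: "nat \<Rightarrow> 'b" and m :: nat and k :: nat
  assumes "\<And>i. i < n \<Longrightarrow> finite (X i)" and "\<And>i. i < n \<Longrightarrow> x0 i \<in> X i"
    and "\<And>j. j < m \<Longrightarrow> finite (Y j)" and "\<And>j. j < m \<Longrightarrow> y0 j \<in> Y j"
    and "1 \<le> k" and "k \<le> n"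
    and "1 + (\<Sum>j<m. (real (card (Y j)) - 1))
           \<ge> (\<Prod>i<k. real (card (X i))) / real (Max ((\<lambda>j. card (X j)) ` {..<k}))"
  shows "\<forall>p\<in>partition_model (prefix_blocks X n k).
           approx_by (PiE {..<n} X) (RBM X x0 n Y y0 m) p"
proof
  fix p assume p: "p \<in> partition_model (prefix_blocks X n k)"
  note pf = partition_facts[OF assms(1,2,6) p]
  obtain l \<sigma> where l: "l < k" and \<sigma>: "\<sigma> ` PiE ({..<k} - {l}) X \<subseteq> stat_index Y y0 m"
    "inj_on \<sigma> (PiE ({..<k} - {l}) X)"
    using comb_lemma[OF assms] by blast
  define C where "C = 1 + real (card (PiE {..<m} Y))"
  have "\<forall>T. \<exists>\<Theta>. T \<ge> 0 \<longrightarrow> (\<forall>x\<in>PiE {..<n} X.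
     \<bar>(\<Sum>y\<in>PiE {..<m} Y. exp (rbm_energy X x0 n Y y0 m \<Theta> x y)) - p x\<bar> \<le> C * exp (- T))"
  proof
    fix T :: real
    show "\<exists>\<Theta>. T \<ge> 0 \<longrightarrow> (\<forall>x\<in>PiE {..<n} X.
     \<bar>(\<Sum>y\<in>PiE {..<m} Y. exp (rbm_energy X x0 n Y y0 m \<Theta> x y)) - p x\<bar> \<le> C * exp (- T))"
    proof (cases "T \<ge> 0")
      case True
      have c: "\<exists>\<Theta>. \<forall>x\<in>PiE {..<n} X.
        \<bar>(\<Sum>y\<in>PiE {..<m} Y. exp (rbm_energy X x0 n Y y0 m \<Theta> x y)) - p x\<bar> \<le> C * exp (- T)"
        unfolding C_def by (rule construction[OF assms(1-4,6) l \<sigma> pf(1,2,4) True]) auto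
      then obtain \<Theta> where "\<forall>x\<in>PiE {..<n} X.
        \<bar>(\<Sum>y\<in>PiE {..<m} Y. exp (rbm_energy X x0 n Y y0 m \<Theta> x y)) - p x\<bar> \<le> C * exp (- T)" by (elim exE)
      then show ?thesis by (intro exI[of _ \<Theta>]) simp
    qed simp
  qed
  then obtain \<Theta>f where \<Theta>f0: "\<forall>T. T \<ge> 0 \<longrightarrow> (\<forall>x\<in>PiE {..<n} X.
     \<bar>(\<Sum>y\<in>PiE {..<m} Y. exp (rbm_energy X x0 n Y y0 m (\<Theta>f T) x y)) - p x\<bar> \<le> C * exp (- T))"
    by (rule choice[THEN exE])
  have \<Theta>f: "\<And>T x. T \<ge> 0 \<Longrightarrow> x \<in> PiE {..<n} X \<Longrightarrow>
     \<bar>(\<Sum>y\<in>PiE {..<m} Y. exp (rbm_energy X x0 n Y y0 m (\<Theta>f T) x y)) - p x\<bar> \<le> C * exp (- T)"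
    using \<Theta>f0 by blast
  define U where "U = (\<lambda>T x. \<Sum>y\<in>PiE {..<m} Y. exp (rbm_energy X x0 n Y y0 m (\<Theta>f T) x y))"
  have finPX: "finite (PiE {..<n} X)" using assms(1) by (intro finite_PiE) auto
  have \<Theta>U: "\<And>T x. T \<ge> 0 \<Longrightarrow> x \<in> PiE {..<n} X \<Longrightarrow> \<bar>U T x - p x\<bar> \<le> C * exp (- T)"
    unfolding U_def by (rule \<Theta>f)
  show "approx_by (PiE {..<n} X) (RBM X x0 n Y y0 m) p"
    unfolding approx_by_def
  proof (intro allI impI)
    fix \<epsilon> :: real assume eps: "\<epsilon> > 0"
    obtain T where T: "T \<ge> 0" and TT: "\<forall>x\<in>PiE {..<n} X. \<bar>p x - U T x / (\<Sum>x'\<in>PiE {..<n} X. U T x')\<bar> < \<epsilon>"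
      using approx_lemma[OF finPX pf(3) \<Theta>U eps] by blast
    have "rbm_dist X x0 n Y y0 m (\<Theta>f T) \<in> RBM X x0 n Y y0 m" unfolding RBM_def by blast
    moreover have "rbm_dist X x0 n Y y0 m (\<Theta>f T) x = U T x / (\<Sum>x'\<in>PiE {..<n} X. U T x')" for x
      unfolding rbm_dist_def U_def by simp
    ultimately show "\<exists>q\<in>RBM X x0 n Y y0 m. \<forall>x\<in>PiE {..<n} X. \<bar>p x - q x\<bar> < \<epsilon>"
      using TT by (intro bexI[of _ "rbm_dist X x0 n Y y0 m (\<Theta>f T)"]) auto
  qed
qed

end
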